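(* Let $\hat\alpha\in\{-2,-3,\dots\}$ and let $\mathcal F=(F_1,F_2)$ be a pair of finite sets of positive integers satisfying $\{0,1,\dots,-\hat\alpha-1\}\subset F_1\cup(-\hat\alpha-1-F_2)$, and assume that $\hat c=\hat\alpha+1$ and $\mathcal F$ are admissible (i.e. $\prod_{h\in\mathcal H}(x-h)\ge0$ for all $x\in\mathbb N\setminus F_1$). Then $\hat\alpha+s_{\mathcal F}\ne-1$, and: (1) if $\hat\alpha+s_{\mathcal F}\le-2$, then $\hat c'=\hat\alpha+1+s_{\mathcal F}$ and $\mathcal F_\Downarrow=(F'_1,F'_2)$ satisfy $\{0,1,\dots,-\hat c'\}\subset F'_1\cup(-\hat c'-F'_2)$ and are admissible in the same sense; (2) if $\hat\alpha+s_{\mathcal F}\ge0$, then $d=\hat\alpha+1+s_{\mathcal F}$ and $\mathcal F_\Downarrow=(F'_1,F'_2)$ are admissible in the sense that $\prod_{f\in F'_1}(x-f)\prod_{f\in F'_2}(x+d+f)\Gamma(x+d)\ge0$ for all $x\in\mathbb N$.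
   Context: $\mathbb N=\{0,1,\dots\}$; $t-F=\{t-f:f\in F\}$. For $\hat c\in\{0,-1,\dots\}$ and pair $(F_1,F_2)$: $\mathcal H=[(F_1\cup(-\hat c-F_2))\setminus\{0,\dots,-\hat c\}]\cup[F_1\cap(-\hat c-F_2)]$. For a finite set $F=\{f_1<\dots<f_{n_F}\}$ of positive integers: $s_F=1$ if $F=\emptyset$; $s_F=n_F+1$ if $F=\{1,\dots,n_F\}$; otherwise $s_F=\min\{s\ge1:s<f_s\}$. $F_\Downarrow=\emptyset$ if $F=\emptyset$ or $F=\{1,\dots,n_F\}$; otherwise $F_\Downarrow=\{f_{s_F}-s_F,\dots,f_{n_F}-s_F\}$. For a pair, $s_{\mathcal F}=s_{F_1}$ and $\mathcal F_\Downarrow=((F_1)_\Downarrow,F_2)$. *)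

theory Defs
  imports "HOL-Analysis.Analysis"
begin

text \<open>Finite sets of positive integers are modelled as int sets.
  For F = {f_1 < ... < f_n}, f_s is (sorted_list_of_set F) ! (s-1).\<close>

definition s_idx :: "int set \<Rightarrow> nat" where
  "s_idx F = (let n = card F; xs = sorted_list_of_set F in
     if F = {} then 1
     else if F = {1..int n} then n + 1
     else (LEAST s. 1 \<le> s \<and> s \<le> n \<and> int s < xs ! (s - 1)))"

definition F_down :: "int set \<Rightarrow> int set" where
  "F_down F = (let n = card F; xs = sorted_list_of_set F; s = s_idx F in
     if F = {} \<or> F = {1..int n} then {}
     else {xs ! i - int s | i. s - 1 \<le> i \<and> i < n})"

definition H_set :: "int \<Rightarrow> int set \<Rightarrow> int set \<Rightarrow> int set" where
  "H_set c F1 F2 =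
     ((F1 \<union> ((\<lambda>f. - c - f) ` F2)) - {0..-c}) \<union> (F1 \<inter> ((\<lambda>f. - c - f) ` F2))"

definition admissible :: "int \<Rightarrow> int set \<Rightarrow> int set \<Rightarrow> bool" where
  "admissible c F1 F2 \<longleftrightarrow>
     (\<forall>x::int. 0 \<le> x \<and> x \<notin> F1 \<longrightarrow> (\<Prod>h\<in>H_set c F1 F2. x - h) \<ge> 0)"

end

theory Submission imports Defs begin

lemma sorted_gap:
  fixes xs :: "int list"
  assumes "sorted_wrt (<) xs" "i \<le> j" "j < length xs"
  shows "xs ! i + int (j - i) \<le> xs ! j"
  using assms(2,3)
proof (induction j)
  case 0 then show ?case by simp
next
  case (Suc j)
  show ?case
  proof (cases "i = Suc j")
    case True then show ?thesis by simp
  next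
    case False
    then have "i \<le> j" using Suc.prems by simp
    then have "xs ! i + int (j - i) \<le> xs ! j" using Suc by simp
    moreover have "xs ! j < xs ! Suc j" using assms(1) Suc.prems
      by (simp add: sorted_wrt_iff_nth_less)
    ultimately show ?thesis using \<open>i \<le> j\<close> by (simp add: Suc_diff_le)
  qed
qed

lemma s_idx_props:
  assumes fin: "finite F" and pos: "\<forall>f\<in>F. f > 0"
  shows "s_idx F \<ge> 1 \<and> int (s_idx F) \<notin> F \<and> (\<forall>k. 1 \<le> k \<and> k < int (s_idx F) \<longrightarrow> k \<in> F)
     \<and> F_down F = (\<lambda>f. f - int (s_idx F)) ` {f\<in>F. f > int (s_idx F)}"
proof -
  define n where "n = card F"
  define xs where "xs = sorted_list_of_set F"
  have sx: "set xs = F" using fin by (simp add: xs_def)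
  have lx: "length xs = n" using fin by (simp add: xs_def n_def)
  have st: "sorted_wrt (<) xs" using fin by (simp add: xs_def strict_sorted_list_of_set)
  have low: "xs ! i \<ge> int i + 1" if "i < n" for i
  proof -
    have "xs ! 0 > 0" using pos sx lx that by (metis gr_implies_not0 neq0_conv nth_mem)
    moreover have "xs ! 0 + int (i - 0) \<le> xs ! i" using sorted_gap[OF st, of 0 i] that lx by simp
    ultimately show ?thesis by simp
  qed
  show ?thesis
  proof (cases "F = {}")
    case True then show ?thesis by (simp add: s_idx_def F_down_def)
  next
    case ne: False
    show ?thesis
    proof (cases "F = {1..int n}")
      case True
      then have "s_idx F = n + 1" "F_down F = {}" using ne by (simp_all add: s_idx_def F_down_def n_def Let_def)
      then show ?thesis using True by auto
    next
      case False
      define P where "P s \<longleftrightarrow> 1 \<le> s \<and> s \<le> n \<and> int s < xs ! (s - 1)" for s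
      have sdef: "s_idx F = (LEAST s. P s)" using ne False
        by (simp add: s_idx_def Let_def P_def n_def xs_def)
      have fd: "F_down F = {xs ! i - int (s_idx F) | i. s_idx F - 1 \<le> i \<and> i < n}" using ne False
        by (simp add: F_down_def Let_def n_def xs_def)
      have ex: "\<exists>s. P s"
      proof (rule ccontr)
        assume "\<not> (\<exists>s. P s)"
        then have eq: "xs ! i = int i + 1" if "i < n" for i
        proof -
          have "\<not> P (i+1)" using \<open>\<not> (\<exists>s. P s)\<close> by blast
          then have "xs ! i \<le> int i + 1" using that unfolding P_def by simp
          then show ?thesis using low[OF that] by simp
        qed
        have "F \<subseteq> {1..int n}"
        proof
          fix f assume "f \<in> F"
          then obtain i where "i < n" "f = xs ! i" using sx lx by (metis in_set_conv_nth)
          then show "f \<in> {1..int n}" using eq by auto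
        qed
        moreover have "card {1..int n} = n" by simp
        ultimately have "F = {1..int n}" using n_def by (simp add: card_subset_eq)
        then show False using False by simp
      qed
      define s where "s = s_idx F"
      have Ps: "P s" using ex sdef s_def by (metis LeastI)
      have notP: "\<not> P k" if "k < s" for k using sdef s_def that by (metis not_less_Least)
      have init: "xs ! (k - 1) = int k" if "1 \<le> k" "k < s" for k
        using notP[OF that(2)] low[of "k-1"] Ps that unfolding P_def by fastforce
      have sn: "s \<notin> F"
      proof
        assume "int s \<in> F"
        then obtain j where j: "j < n" "xs ! j = int s" using sx lx by (metis in_set_conv_nth)
        show False
        proof (cases "j < s - 1")
          case True
          then have "j + 1 < s" by simp
          then have "xs ! j = int (j+1)" using init[of "j+1"] by simp
          then show ?thesis using j \<open>j + 1 < s\<close> by simp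
        next
          case False
          then have "xs ! (s - 1) \<le> xs ! j" using sorted_gap[OF st, of "s-1" j] j lx by simp
          then show ?thesis using Ps j unfolding P_def by simp
        qed
      qed
      have ini: "\<forall>k. 1 \<le> k \<and> k < int s \<longrightarrow> k \<in> F"
      proof (intro allI impI)
        fix k :: int assume k: "1 \<le> k \<and> k < int s"
        then have "1 \<le> nat k" "nat k < s" by linarith+
        then have "xs ! (nat k - 1) = k" using init[of "nat k"] k by simp
        moreover have "nat k - 1 < n" using k Ps unfolding P_def by linarith
        ultimately show "k \<in> F" using sx lx by (metis nth_mem)
      qed
      have "F_down F = (\<lambda>f. f - int s) ` {f\<in>F. f > int s}"
      proof
        show "F_down F \<subseteq> (\<lambda>f. f - int s) ` {f\<in>F. f > int s}"
        proof
          fix y assume "y \<in> F_down F"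
          then obtain i where i: "s - 1 \<le> i" "i < n" "y = xs ! i - int s" using fd s_def by auto
          have "xs ! (s - 1) \<le> xs ! i" using sorted_gap[OF st, of "s-1" i] i lx by simp
          then have "xs ! i > int s" using Ps unfolding P_def by simp
          moreover have "xs ! i \<in> F" using i sx lx by (metis nth_mem)
          ultimately show "y \<in> (\<lambda>f. f - int s) ` {f\<in>F. f > int s}" using i by auto
        qed
        show "(\<lambda>f. f - int s) ` {f\<in>F. f > int s} \<subseteq> F_down F"
        proof
          fix y assume "y \<in> (\<lambda>f. f - int s) ` {f\<in>F. f > int s}"
          then obtain f where f: "f \<in> F" "f > int s" "y = f - int s" by auto
          then obtain i where i: "i < n" "xs ! i = f" using sx lx by (metis in_set_conv_nth)
          have "s - 1 \<le> i"
          proof (rule ccontr)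
            assume "\<not> s - 1 \<le> i"
            then have "i + 1 < s" by simp
            then have "xs ! i = int (i+1)" using init[of "i+1"] by simp
            then show False using i f \<open>i + 1 < s\<close> by simp
          qed
          then show "y \<in> F_down F" using fd s_def i f by auto
        qed
      qed
      then show ?thesis using Ps sn ini s_def unfolding P_def by simp
    qed
  qed
qed

lemma img_mem: "(x::int) \<in> (\<lambda>f. a - f) ` A \<longleftrightarrow> a - x \<in> A"
proof
  assume "x \<in> (\<lambda>f. a - f) ` A"
  then obtain f where "f \<in> A" "x = a - f" by auto
  then show "a - x \<in> A" by simp
next
  assume "a - x \<in> A"
  then show "x \<in> (\<lambda>f. a - f) ` A" by (rule rev_image_eqI) simp
qed

lemma bool_aux:
  fixes g z s m :: int
  assumes "L \<longleftrightarrow> (((A \<and> z > 0) \<or> B) \<and> \<not> (0 \<le> z \<and> z \<le> m - s)) \<or> ((A \<and> z > 0) \<and> B)"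
    and "R \<longleftrightarrow> z + s = 0 \<or> ((A \<or> B) \<and> \<not> (0 \<le> z + s \<and> z + s \<le> m)) \<or> (A \<and> B)"
    and "A \<Longrightarrow> z + s > 0" and "B \<Longrightarrow> m - (z + s) > 0"
    and "1 \<le> z + s \<Longrightarrow> z + s < s \<Longrightarrow> A" and "z + s = 0 \<Longrightarrow> B"
    and "z + s = s \<Longrightarrow> \<not> A" and "s < m" and "1 \<le> s"
  shows "L \<longleftrightarrow> R"
proof (cases "z + s < 0")
  case True then show ?thesis using assms by auto
next
  case False
  then consider "z + s = 0" | "1 \<le> z + s \<and> z + s < s" | "z = 0" | "0 < z \<and> z \<le> m - s" | "z > m - s" by linarith
  then show ?thesis
  proof cases
    case 1 then show ?thesis using assms by auto
  next
    case 2 then have A using assms by blast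
    then show ?thesis using assms 2 by auto
  next
    case 3 then have "\<not> A" using assms by auto
    then show ?thesis using assms 3 by auto
  next
    case 4 then show ?thesis using assms by auto
  next
    case 5 then have "\<not> B" using assms by force
    then show ?thesis using assms 5 by auto
  qed
qed

theorem mainTheorem13:
  fixes \<alpha> :: int and F1 F2 :: "int set"
  assumes "\<alpha> \<le> -2"
    and "finite F1" and "finite F2"
    and "\<forall>f\<in>F1. f > 0" and "\<forall>f\<in>F2. f > 0"
    and "{0..-\<alpha>-1} \<subseteq> F1 \<union> ((\<lambda>f. -\<alpha> - 1 - f) ` F2)"
    and "admissible (\<alpha> + 1) F1 F2"
  shows "\<alpha> + int (s_idx F1) \<noteq> -1
    \<and> (\<alpha> + int (s_idx F1) \<le> -2 \<longrightarrow>
         (let c' = \<alpha> + 1 + int (s_idx F1) in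
            {0..-c'} \<subseteq> F_down F1 \<union> ((\<lambda>f. -c' - f) ` F2)
            \<and> admissible c' (F_down F1) F2))
    \<and> (\<alpha> + int (s_idx F1) \<ge> 0 \<longrightarrow>
         (let d = \<alpha> + 1 + int (s_idx F1) in
            \<forall>x::int. 0 \<le> x \<longrightarrow>
              (\<Prod>f\<in>F_down F1. real_of_int (x - f)) * (\<Prod>f\<in>F2. real_of_int (x + d + f))
                * Gamma (real_of_int (x + d)) \<ge> 0))"
proof -
  note sp = s_idx_props[OF assms(2,4)]
  define s where "s = int (s_idx F1)"
  define m where "m = -\<alpha> - 1"
  define H where "H = H_set (\<alpha> + 1) F1 F2"
  have s1: "s \<ge> 1" using sp s_def by simp
  have snF: "s \<notin> F1" using sp s_def by simp
  have init: "\<And>k. 1 \<le> k \<Longrightarrow> k < s \<Longrightarrow> k \<in> F1" using sp s_def by simp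
  have Fd: "F_down F1 = (\<lambda>f. f - s) ` {f\<in>F1. f > s}" using sp s_def by simp
  have fd_mem: "y \<in> F_down F1 \<longleftrightarrow> y + s \<in> F1 \<and> y > 0" for y
    unfolding Fd by (auto simp: image_iff)
  have m1: "m \<ge> 1" using assms(1) m_def by simp
  have cov: "\<And>y. 0 \<le> y \<Longrightarrow> y \<le> m \<Longrightarrow> y \<in> F1 \<or> m - y \<in> F2"
    using assms(6) unfolding m_def by (auto simp: img_mem)
  have mF1: "m \<in> F1" using cov[of m] m1 assms(5) by auto
  have mF2: "m \<in> F2" using cov[of 0] m1 assms(4) by auto
  have finH: "finite H" unfolding H_def H_set_def using assms(2,3) by simp
  have Hmem: "h \<in> H \<longleftrightarrow> ((h \<in> F1 \<or> m - h \<in> F2) \<and> \<not> (0 \<le> h \<and> h \<le> m)) \<or> (h \<in> F1 \<and> m - h \<in> F2)" for h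
    unfolding H_def H_set_def m_def by (auto simp: img_mem)
  have adm: "\<And>y. 0 \<le> y \<Longrightarrow> y \<notin> F1 \<Longrightarrow> (\<Prod>h\<in>H. y - h) \<ge> 0"
    using assms(7) unfolding admissible_def H_def by blast
  have P1: "\<alpha> + s \<noteq> -1"
  proof
    assume "\<alpha> + s = -1"
    then have "s = m" using m_def by simp
    then show False using snF mF1 by simp
  qed
  have P2: "\<alpha> + s \<le> -2 \<longrightarrow>
         (let c' = \<alpha> + 1 + s in
            {0..-c'} \<subseteq> F_down F1 \<union> ((\<lambda>f. -c' - f) ` F2)
            \<and> admissible c' (F_down F1) F2)"
  proof (intro impI)
    assume a: "\<alpha> + s \<le> -2"
    have cm: "-(\<alpha> + 1 + s) = m - s" using m_def by simp
    have incl: "{0..m - s} \<subseteq> F_down F1 \<union> ((\<lambda>f. (m - s) - f) ` F2)"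
    proof
      fix y assume y: "y \<in> {0..m - s}"
      then have "y + s \<in> F1 \<or> m - (y + s) \<in> F2" using cov[of "y+s"] s1 by simp
      moreover have "y + s \<in> F1 \<Longrightarrow> y > 0" using snF y by (cases "y = 0") auto
      moreover have "m - (y + s) = (m - s) - y" by simp
      ultimately show "y \<in> F_down F1 \<union> ((\<lambda>f. (m - s) - f) ` F2)"
        unfolding Un_iff img_mem fd_mem by metis
    qed
    have Heq: "H_set (\<alpha> + 1 + s) (F_down F1) F2 = (\<lambda>h. h - s) ` (insert 0 H)"
    proof (rule set_eqI)
      fix z
      have e1: "z \<in> (\<lambda>h. h - s) ` (insert 0 H) \<longleftrightarrow> z + s \<in> insert 0 H"
        by (auto simp: image_iff) (metis add_diff_cancel_right')
      have e2: "z \<in> H_set (\<alpha> + 1 + s) (F_down F1) F2 \<longleftrightarrow>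
         (((z + s \<in> F1 \<and> z > 0) \<or> m - (z + s) \<in> F2) \<and> \<not> (0 \<le> z \<and> z \<le> m - s))
          \<or> ((z + s \<in> F1 \<and> z > 0) \<and> m - (z + s) \<in> F2)"
      proof -
        have eqz: "(m - s) - z = m - (z + s)" by simp
        show ?thesis unfolding H_set_def cm Un_iff Int_iff Diff_iff img_mem fd_mem eqz atLeastAtMost_iff
          by blast
      qed
      have e3: "z + s \<in> insert 0 H \<longleftrightarrow> z + s = 0 \<or>
          ((z + s \<in> F1 \<or> m - (z + s) \<in> F2) \<and> \<not> (0 \<le> z + s \<and> z + s \<le> m)) \<or> (z + s \<in> F1 \<and> m - (z + s) \<in> F2)"
        using Hmem by simp
      have f1: "z + s \<in> F1 \<Longrightarrow> z + s > 0" using assms(4) by auto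
      have f2: "m - (z + s) \<in> F2 \<Longrightarrow> m - (z + s) > 0" using assms(5) by auto
      have f3: "1 \<le> z + s \<Longrightarrow> z + s < s \<Longrightarrow> z + s \<in> F1" using init by simp
      have f4: "z + s = 0 \<Longrightarrow> m - (z + s) \<in> F2" using mF2 by simp
      have f5: "z + s = s \<Longrightarrow> z + s \<notin> F1" using snF by simp
      have sm: "s < m" using a m_def by simp
      have "z \<in> H_set (\<alpha> + 1 + s) (F_down F1) F2 \<longleftrightarrow> z + s \<in> insert 0 H"
        by (rule bool_aux[OF e2 e3 f1 f2 f3 f4 f5 sm s1])
      then show "z \<in> H_set (\<alpha> + 1 + s) (F_down F1) F2 \<longleftrightarrow> z \<in> (\<lambda>h. h - s) ` (insert 0 H)"
        using e1 by simp
    qed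
    have n0: "0 \<notin> F1" using assms(4) by auto
    have m0: "0 \<le> (0::int) \<and> 0 \<le> m" using m1 by simp
    have 0: "0 \<notin> H" using Hmem[of 0] n0 m0 by blast
    have admc: "admissible (\<alpha> + 1 + s) (F_down F1) F2"
      unfolding admissible_def
    proof (intro allI impI)
      fix x assume x: "0 \<le> x \<and> x \<notin> F_down F1"
      have xs: "x + s \<notin> F1"
      proof
        assume xF: "x + s \<in> F1"
        show False
        proof (cases "x = 0")
          case True then show False using xF snF by simp
        next
          case False
          then have "x > 0" using x by simp
          then have "x \<in> F_down F1" using fd_mem[of x] xF by blast
          then show False using x by blast
        qed
      qed
      have "(\<Prod>h\<in>H_set (\<alpha> + 1 + s) (F_down F1) F2. x - h) = (\<Prod>h\<in>insert 0 H. x - (h - s))"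
        unfolding Heq by (subst prod.reindex) (auto simp: inj_on_def)
      also have "\<dots> = (x + s) * (\<Prod>h\<in>H. (x + s) - h)"
        using finH 0 by (simp add: algebra_simps)
      finally show "(\<Prod>h\<in>H_set (\<alpha> + 1 + s) (F_down F1) F2. x - h) \<ge> 0"
        using adm[of "x+s"] xs x s1 by simp
    qed
    show "let c' = \<alpha> + 1 + s in
            {0..-c'} \<subseteq> F_down F1 \<union> ((\<lambda>f. -c' - f) ` F2)
            \<and> admissible c' (F_down F1) F2"
      unfolding Let_def cm using incl admc by simp
  qed
  have P3: "\<alpha> + s \<ge> 0 \<longrightarrow>
         (let d = \<alpha> + 1 + s in
            \<forall>x::int. 0 \<le> x \<longrightarrow>
              (\<Prod>f\<in>F_down F1. real_of_int (x - f)) * (\<Prod>f\<in>F2. real_of_int (x + d + f))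
                * Gamma (real_of_int (x + d)) \<ge> 0)"
  proof (intro impI)
    assume a: "\<alpha> + s \<ge> 0"
    define A where "A = {f\<in>F1. f > s}"
    have finA: "finite A" using assms(2) A_def by simp
    have AH: "A \<subseteq> H"
    proof
      fix f assume "f \<in> A"
      then have fF: "f \<in> F1" and fs: "f > s" unfolding A_def by auto
      have "\<not> (0 \<le> f \<and> f \<le> m)" using fs a m_def by simp
      then show "f \<in> H" using Hmem[of f] fF by blast
    qed
    have key: "(\<Prod>f\<in>F_down F1. x - f) \<ge> 0" if x: "0 \<le> x" for x
    proof -
      have "(\<Prod>f\<in>F_down F1. x - f) = (\<Prod>f\<in>A. (x + s) - f)"
        unfolding Fd A_def[symmetric] by (subst prod.reindex) (auto simp: inj_on_def algebra_simps)
      also have "\<dots> \<ge> 0"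
      proof (cases "x + s \<in> F1")
        case True
        have "x + s \<noteq> s" using True snF by auto
        then have "x + s > s" using x by simp
        then have "x + s \<in> A" using True unfolding A_def by simp
        then show ?thesis using finA by (simp add: prod_zero)
      next
        case False
        have "(\<Prod>h\<in>H. (x + s) - h) = (\<Prod>h\<in>H - A. (x + s) - h) * (\<Prod>h\<in>A. (x + s) - h)"
          using finH AH by (simp add: prod.subset_diff)
        moreover have "(\<Prod>h\<in>H - A. (x + s) - h) > 0"
        proof (rule prod_pos)
          fix h assume h: "h \<in> H - A"
          then have "h < s"
          proof (cases "m - h \<in> F2")
            case True then show ?thesis using assms(5) a m_def by force
          next
            case False
            have hH: "h \<in> H" and hA: "h \<notin> A" using h by auto
            then have hF: "h \<in> F1" using Hmem[of h] False by blast
            then have "\<not> h > s" using hA unfolding A_def by simp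
            moreover have "h \<noteq> s" using hF snF by auto
            ultimately show ?thesis by simp
          qed
          then show "(x + s) - h > 0" using x by simp
        qed
        ultimately show ?thesis using adm[of "x+s"] False x s1
          by (simp add: zero_le_mult_iff)
      qed
      finally show ?thesis .
    qed
    show "let d = \<alpha> + 1 + s in
            \<forall>x::int. 0 \<le> x \<longrightarrow>
              (\<Prod>f\<in>F_down F1. real_of_int (x - f)) * (\<Prod>f\<in>F2. real_of_int (x + d + f))
                * Gamma (real_of_int (x + d)) \<ge> 0"
      unfolding Let_def
    proof (intro allI impI)
      fix x :: int assume x: "0 \<le> x"
      have d1: "\<alpha> + 1 + s \<ge> 1" using a by simp
      have g1: "(\<Prod>f\<in>F_down F1. real_of_int (x - f)) \<ge> 0"
        using key[OF x] by (metis of_int_0_le_iff of_int_prod)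
      have g2: "(\<Prod>f\<in>F2. real_of_int (x + (\<alpha> + 1 + s) + f)) \<ge> 0"
        by (rule prod_nonneg) (use assms(5) x d1 in auto)
      have g3: "Gamma (real_of_int (x + (\<alpha> + 1 + s))) > 0"
        using x d1 by (simp add: Gamma_real_pos_exp)
      show "(\<Prod>f\<in>F_down F1. real_of_int (x - f)) * (\<Prod>f\<in>F2. real_of_int (x + (\<alpha> + 1 + s) + f))
                * Gamma (real_of_int (x + (\<alpha> + 1 + s))) \<ge> 0"
        using g1 g2 g3 by simp
    qed
  qed
  show ?thesis using P1 P2 P3 unfolding s_def by simp
qed

end
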